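(* Under the standing assumptions on $c$, $\mathcal{X}$, $\mathcal{Y}$, let $\nu\in\mathbb{P}_{\textup{cost}}(\mathcal{Y})$, $\mu\in\mathbb{P}_{\textup{cost}}(\mathcal{X})$, and let $f:\mathcal{Y}\to\mathbb{R}$ be an optimal $c$-concave Kantorovich potential for the transport of $\nu$ to $\mu$. Suppose that $f$ is $\lambda$-convex for some $\lambda\in\mathbb{R}$ (i.e. $y\mapsto f(y)-\frac{\lambda}{2}|y|^2$ is convex), that $\mu$ is absolutely continuous with respect to Lebesgue measure, and that for each $y$ the map $x\mapsto\nabla_yc(x,y)$ has an inverse which is Lipschitz with a constant uniform in $y$. Then $\nu$ is absolutely continuous with respect to Lebesgue measure.
   Context: Standing assumptions. $\mathcal{X},\mathcal{Y}\subset\mathbb{R}^d$ are open sets and $c:\mathcal{X}\times\mathcal{Y}\to[0,\infty)$ satisfies: (A1) $c\in C^2(\mathcal{X}\times\mathcal{Y})$ and $c$ is bi-twisted, i.e. $y\mapsto\nabla_x c(x,y)$ and $x\mapsto\nabla_y c(x,y)$ are injective; (A2) for every $b\in\mathbb{R}$ and $(x',y')\in\mathcal{X}\times\mathcal{Y}$ the sets $\{x\in\mathcal{X}:c(x,y')\le b\}$ and $\{y\in\mathcal{Y}:c(x',y)\le b\}$ are compact; (A3) there is a point $(x_0,y_0)\in\mathcal{X}\times\mathcal{Y}$ such that for every $\varepsilon>0$ there is $B_\varepsilon>0$ with $(1-\varepsilon)c(x_0,y)-B_\varepsilon c(x,y_0)\le c(x,y)\le(1+\varepsilon)c(x_0,y)+B_\varepsilon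 c(x,y_0)$ and $(1-\varepsilon)c(x,y_0)-B_\varepsilon c(x_0,y)\le c(x,y)\le(1+\varepsilon)c(x,y_0)+B_\varepsilon c(x_0,y)$ for all $(x,y)\in\mathcal{X}\times\mathcal{Y}$. Define $\mathbb{P}_{\textup{cost}}(\mathcal{X})=\{\mu\in\mathcal{P}(\mathcal{X}):\int c(x,y_0)\,\mathrm{d}\mu(x)<\infty\}$ and $\mathbb{P}_{\textup{cost}}(\mathcal{Y})=\{\nu\in\mathcal{P}(\mathcal{Y}):\int c(x_0,y)\,\mathrm{d}\nu(y)<\infty\}$. $K_c(\mu,\nu)=\inf_{\pi\in\Pi(\mu,\nu)}\int c\,\mathrm{d}\pi$. For $f:\mathcal{Y}\to\mathbb{R}$, $f^c(x)=\inf_y(c(x,y)-f(y))$; $f$ is $c$-concave if it equals its double $c$-transform; a $c$-concave $f$ is an optimal Kantorovich potential for the transport of $\nu$ to $\mu$ if $K_c(\mu,\nu)=\int f^c\,\mathrm{d}\mu+\int f\,\mathrm{d}\nu$. *)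

theory Defs
  imports "HOL-Analysis.Analysis" "HOL-Probability.Probability"
begin

definition C2_on :: "'b::euclidean_space set \<Rightarrow> ('b \<Rightarrow> real) \<Rightarrow> bool" where
  "C2_on S g \<longleftrightarrow> (\<exists>(g' :: 'b \<Rightarrow> ('b \<Rightarrow>\<^sub>L real)) (g'' :: 'b \<Rightarrow> ('b \<Rightarrow>\<^sub>L ('b \<Rightarrow>\<^sub>L real))).
      (\<forall>z\<in>S. (g has_derivative blinfun_apply (g' z)) (at z)) \<and>
      (\<forall>z\<in>S. (g' has_derivative blinfun_apply (g'' z)) (at z)) \<and>
      continuous_on S g'')"

definition grad_x :: "('a::real_inner \<Rightarrow> 'a \<Rightarrow> real) \<Rightarrow> 'a \<Rightarrow> 'a \<Rightarrow> 'a" where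
  "grad_x c x y = (SOME D. GDERIV (\<lambda>x'. c x' y) x :> D)"

definition grad_y :: "('a::real_inner \<Rightarrow> 'a \<Rightarrow> real) \<Rightarrow> 'a \<Rightarrow> 'a \<Rightarrow> 'a" where
  "grad_y c x y = (SOME D. GDERIV (\<lambda>y'. c x y') y :> D)"

definition bi_twisted :: "'a::real_inner set \<Rightarrow> 'a set \<Rightarrow> ('a \<Rightarrow> 'a \<Rightarrow> real) \<Rightarrow> bool" where
  "bi_twisted X Y c \<longleftrightarrow> (\<forall>x\<in>X. inj_on (\<lambda>y. grad_x c x y) Y) \<and> (\<forall>y\<in>Y. inj_on (\<lambda>x. grad_y c x y) X)"

definition standing_assms ::
  "'a::euclidean_space set \<Rightarrow> 'a set \<Rightarrow> ('a \<Rightarrow> 'a \<Rightarrow> real) \<Rightarrow> 'a \<Rightarrow> 'a \<Rightarrow> bool" where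
  "standing_assms X Y c x0 y0 \<longleftrightarrow>
     open X \<and> open Y \<and> (\<forall>x\<in>X. \<forall>y\<in>Y. 0 \<le> c x y) \<and>
     C2_on (X \<times> Y) (\<lambda>(x, y). c x y) \<and> bi_twisted X Y c \<and>
     (\<forall>b::real. \<forall>x'\<in>X. \<forall>y'\<in>Y. compact {x\<in>X. c x y' \<le> b} \<and> compact {y\<in>Y. c x' y \<le> b}) \<and>
     x0 \<in> X \<and> y0 \<in> Y \<and>
     (\<forall>\<epsilon>>0. \<exists>B>0. \<forall>x\<in>X. \<forall>y\<in>Y.
        (1 - \<epsilon>) * c x0 y - B * c x y0 \<le> c x y \<and> c x y \<le> (1 + \<epsilon>) * c x0 y + B * c x y0 \<and>
        (1 - \<epsilon>) * c x y0 - B * c x0 y \<le> c x y \<and> c x y \<le> (1 + \<epsilon>) * c x y0 + B * c x0 y)"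

definition prob_on :: "'a::euclidean_space set \<Rightarrow> 'a measure \<Rightarrow> bool" where
  "prob_on S m \<longleftrightarrow> prob_space m \<and> sets m = sets borel \<and> emeasure m S = 1"

definition Pcost_X :: "'a::euclidean_space set \<Rightarrow> ('a \<Rightarrow> 'a \<Rightarrow> real) \<Rightarrow> 'a \<Rightarrow> 'a measure \<Rightarrow> bool" where
  "Pcost_X X c y0 \<mu> \<longleftrightarrow> prob_on X \<mu> \<and> set_integrable \<mu> X (\<lambda>x. c x y0)"

definition Pcost_Y :: "'a::euclidean_space set \<Rightarrow> ('a \<Rightarrow> 'a \<Rightarrow> real) \<Rightarrow> 'a \<Rightarrow> 'a measure \<Rightarrow> bool" where
  "Pcost_Y Y c x0 \<nu> \<longleftrightarrow> prob_on Y \<nu> \<and> set_integrable \<nu> Y (\<lambda>y. c x0 y)"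

definition couplings :: "'a::euclidean_space measure \<Rightarrow> 'a measure \<Rightarrow> ('a \<times> 'a) measure set" where
  "couplings \<mu> \<nu> = {\<pi>. prob_space \<pi> \<and> sets \<pi> = sets borel \<and>
      distr \<pi> borel fst = \<mu> \<and> distr \<pi> borel snd = \<nu>}"

definition Kc :: "'a::euclidean_space set \<Rightarrow> 'a set \<Rightarrow> ('a \<Rightarrow> 'a \<Rightarrow> real) \<Rightarrow> 'a measure \<Rightarrow> 'a measure \<Rightarrow> ennreal" where
  "Kc X Y c \<mu> \<nu> = (INF \<pi>\<in>couplings \<mu> \<nu>. \<integral>\<^sup>+ z\<in>X \<times> Y. ennreal (c (fst z) (snd z)) \<partial>\<pi>)"

definition ctrans :: "'a set \<Rightarrow> ('a \<Rightarrow> 'a \<Rightarrow> real) \<Rightarrow> ('a \<Rightarrow> real) \<Rightarrow> 'a \<Rightarrow> ereal" where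
  "ctrans Y c f x = (INF y\<in>Y. ereal (c x y - f y))"

definition ctrans_back :: "'a set \<Rightarrow> ('a \<Rightarrow> 'a \<Rightarrow> real) \<Rightarrow> ('a \<Rightarrow> ereal) \<Rightarrow> 'a \<Rightarrow> ereal" where
  "ctrans_back X c g y = (INF x\<in>X. ereal (c x y) - g x)"

definition c_concave :: "'a set \<Rightarrow> 'a set \<Rightarrow> ('a \<Rightarrow> 'a \<Rightarrow> real) \<Rightarrow> ('a \<Rightarrow> real) \<Rightarrow> bool" where
  "c_concave X Y c f \<longleftrightarrow> (\<forall>y\<in>Y. ereal (f y) = ctrans_back X c (ctrans Y c f) y)"

definition optimal_potential ::
  "'a::euclidean_space set \<Rightarrow> 'a set \<Rightarrow> ('a \<Rightarrow> 'a \<Rightarrow> real) \<Rightarrow> 'a measure \<Rightarrow> 'a measure \<Rightarrow> ('a \<Rightarrow> real) \<Rightarrow> bool" where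
  "optimal_potential X Y c \<mu> \<nu> f \<longleftrightarrow>
     c_concave X Y c f \<and>
     (AE x in \<mu>. x \<in> X \<longrightarrow> \<bar>ctrans Y c f x\<bar> \<noteq> \<infinity>) \<and>
     set_integrable \<mu> X (\<lambda>x. real_of_ereal (ctrans Y c f x)) \<and>
     set_integrable \<nu> Y f \<and>
     enn2ereal (Kc X Y c \<mu> \<nu>) =
       ereal (set_lebesgue_integral \<mu> X (\<lambda>x. real_of_ereal (ctrans Y c f x))
              + set_lebesgue_integral \<nu> Y f)"

end

theory Submission
  imports Defs
begin


lemma grad_y_eq:
  fixes c :: "'a::euclidean_space \<Rightarrow> 'a \<Rightarrow> real"
  assumes "((\<lambda>w. c x w) has_derivative l) (at y)"
  shows "grad_y c x y \<bullet> k = l k"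
proof -
  have lin: "linear l" using assms has_derivative_linear by blast
  define D where "D = adjoint l 1"
  have eq: "(\<lambda>h. h \<bullet> D) = l"
    by (rule ext) (simp add: D_def adjoint_works[OF lin])
  have G: "GDERIV (\<lambda>w. c x w) y :> D" unfolding gderiv_def eq by (rule assms)
  then have "GDERIV (\<lambda>w. c x w) y :> grad_y c x y" unfolding grad_y_def by (rule someI)
  then have "(\<lambda>h. h \<bullet> grad_y c x y) = l" unfolding gderiv_def
    using has_derivative_unique[OF _ assms] by blast
  then show ?thesis by (metis inner_commute)
qed

lemma partial_y:
  assumes "((\<lambda>(x, y). c x y) has_derivative A) (at (x, y))"
  shows "((\<lambda>w. c x w) has_derivative (\<lambda>k. A (0, k))) (at y within S)"
proof -
  have 1: "((\<lambda>w. (x, w)) has_derivative (\<lambda>k. (0, k))) (at y within S)"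
    by (auto intro!: derivative_eq_intros)
  have "((\<lambda>w. (\<lambda>(x, y). c x y) (x, w)) has_derivative (\<lambda>k. A (0, k))) (at y within S)"
    using has_derivative_compose[OF 1, of "\<lambda>(x, y). c x y" A] assms by simp
  then show ?thesis by simp
qed

lemma eps_le:
  fixes a b C e :: real
  assumes "e > 0" "\<And>t. 0 < t \<Longrightarrow> t < e \<Longrightarrow> a \<le> b + C * t"
  shows "a \<le> b"
proof (rule ccontr)
  assume "\<not> a \<le> b"
  define t where "t = min (e/2) ((a - b) / (2 * (\<bar>C\<bar> + 1)))"
  have tp: "t > 0" using assms(1) \<open>\<not> a \<le> b\<close> by (auto simp: t_def)
  have te: "t < e" using assms(1) by (auto simp: t_def)
  have "C * t \<le> \<bar>C\<bar> * t" using tp by (simp add: mult_right_mono)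
  also have "\<dots> \<le> (\<bar>C\<bar> + 1) * t" using tp by (simp add: mult_right_mono)
  also have "\<dots> \<le> (\<bar>C\<bar> + 1) * ((a - b) / (2 * (\<bar>C\<bar> + 1)))"
    by (intro mult_left_mono) (auto simp: t_def)
  also have "\<dots> = (a - b) / 2" by (simp add: field_simps)
  finally have "C * t \<le> (a - b) / 2" .
  moreover have "a \<le> b + C * t" using assms(2)[OF tp te] .
  ultimately have "a \<le> b + (a - b) / 2" by linarith
  then show False using \<open>\<not> a \<le> b\<close> by (simp add: field_simps)
qed

lemma conv_support:
  fixes F :: "'a::real_inner \<Rightarrow> real"
  assumes cv: "convex_on Y F" and yY: "y \<in> Y" and rho: "\<rho> > 0" and bY: "ball y \<rho> \<subseteq> Y"
    and up: "\<And>z. z \<in> ball y \<rho> \<Longrightarrow> F z \<le> F y + p \<bullet> (z - y) + M * (norm (z - y))\<^sup>2"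
    and zY: "z \<in> Y"
  shows "F y + p \<bullet> (z - y) \<le> F z"
proof (cases "z = y")
  case True then show ?thesis by simp
next
  case False
  define w where "w = z - y"
  have nw: "norm w > 0" using False by (simp add: w_def)
  have cY: "convex Y" using cv by (simp add: convex_on_def)
  show ?thesis
  proof (rule eps_le[where e = "min 1 (\<rho> / norm w)" and C = "M * (norm w)\<^sup>2"])
    show "0 < min 1 (\<rho> / norm w)" using nw rho by simp
    fix t :: real assume t0: "0 < t" and te: "t < min 1 (\<rho> / norm w)"
    have t1: "t \<le> 1" using te by simp
    have tw: "t * norm w < \<rho>" using te nw by (simp add: field_simps)
    define u where "u = (1 - t) *\<^sub>R y + t *\<^sub>R z"
    define v where "v = y - t *\<^sub>R w"
    have h1: "F u \<le> (1 - t) * F y + t * F z"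
      unfolding u_def using convex_onD[OF cv, of t y z] t0 t1 yY zY by simp
    have uY: "u \<in> Y" unfolding u_def using cY yY zY t0 t1 by (simp add: convex_alt)
    have vb: "v \<in> ball y \<rho>" using tw t0 by (simp add: v_def dist_norm)
    then have vY: "v \<in> Y" using bY by auto
    have hh: "(1/2) *\<^sub>R y + (1/2) *\<^sub>R y = y"
      by (simp add: scaleR_add_left[symmetric])
    have yuv: "y = (1 - 1/2) *\<^sub>R u + (1/2) *\<^sub>R v"
      by (simp add: u_def v_def w_def algebra_simps hh)
    have h2: "F y \<le> (1 - 1/2) * F u + (1/2) * F v"
      using convex_onD[OF cv, of "1/2" u v] uY vY yuv by simp
    have h3: "F v \<le> F y + p \<bullet> (v - y) + M * (norm (v - y))\<^sup>2" using up[OF vb] .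
    have e1: "p \<bullet> (v - y) = - t * (p \<bullet> w)" by (simp add: v_def)
    have e2: "(norm (v - y))\<^sup>2 = t\<^sup>2 * (norm w)\<^sup>2" using t0 by (simp add: v_def power_mult_distrib)
    have "t * F y \<le> t * F z - t * (p \<bullet> w) + t * (t * (M * (norm w)\<^sup>2))"
      using h1 h2 h3 e1 e2 by (simp add: algebra_simps power2_eq_square)
    then have "t * (F y + p \<bullet> w) \<le> t * (F z + M * (norm w)\<^sup>2 * t)"
      by (simp add: algebra_simps)
    then show "F y + p \<bullet> (z - y) \<le> F z + M * (norm w)\<^sup>2 * t"
      using t0 by (simp add: w_def)
  qed
qed

lemma grad_lip:
  fixes g' :: "('a::euclidean_space \<times> 'a) \<Rightarrow> ('a \<times> 'a) \<Rightarrow>\<^sub>L real"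
    and g'' :: "('a \<times> 'a) \<Rightarrow> ('a \<times> 'a) \<Rightarrow>\<^sub>L (('a \<times> 'a) \<Rightarrow>\<^sub>L real)"
  assumes d2: "\<forall>z\<in>X \<times> Y. (g' has_derivative blinfun_apply (g'' z)) (at z)"
    and cont: "continuous_on (X \<times> Y) g''"
    and K: "compact K" "K \<subseteq> X" and W: "compact W" "convex W" "W \<subseteq> Y"
  shows "\<exists>M. M \<ge> 0 \<and> (\<forall>x\<in>K. \<forall>w1\<in>W. \<forall>w2\<in>W. norm (g' (x, w1) - g' (x, w2)) \<le> M * norm (w1 - w2))"
proof -
  have "compact (g'' ` (K \<times> W))"
    using K W by (intro compact_continuous_image continuous_on_subset[OF cont] compact_Times) auto
  then obtain M where M: "M > 0" "\<And>z. z \<in> K \<times> W \<Longrightarrow> norm (g'' z) \<le> M"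
    using compact_imp_bounded bounded_pos by (metis image_eqI)
  have "norm (g' (x, w1) - g' (x, w2)) \<le> M * norm (w1 - w2)"
    if x: "x \<in> K" and w: "w1 \<in> W" "w2 \<in> W" for x w1 w2
  proof -
    have "norm (g' (x, w1) - g' (x, w2)) \<le> M * norm ((x, w1) - (x, w2))"
    proof (rule differentiable_bound[of "{x} \<times> W" g' "\<lambda>z. blinfun_apply (g'' z)"])
      show "convex ({x} \<times> W)" using W by (intro convex_Times) auto
      fix z assume z: "z \<in> {x} \<times> W"
      then have "z \<in> X \<times> Y" using x K W by auto
      then show "(g' has_derivative blinfun_apply (g'' z)) (at z within {x} \<times> W)"
        using d2 has_derivative_at_withinI by blast
      show "onorm (blinfun_apply (g'' z)) \<le> M"
        using M(2)[of z] z x by (auto simp: norm_blinfun.rep_eq[symmetric])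
    qed (use x w in auto)
    then show ?thesis by simp
  qed
  then show ?thesis using M(1) by (intro exI[of _ M]) auto
qed

lemma grad_repr:
  fixes c :: "'a::euclidean_space \<Rightarrow> 'a \<Rightarrow> real"
  assumes d1: "\<forall>z\<in>X \<times> Y. ((\<lambda>(x, y). c x y) has_derivative blinfun_apply (g' z)) (at z)"
    and "x \<in> X" "w \<in> Y"
  shows "grad_y c x w \<bullet> k = blinfun_apply (g' (x, w)) (0, k)"
proof -
  have "((\<lambda>(x, y). c x y) has_derivative blinfun_apply (g' (x, w))) (at (x, w))"
    using d1 assms by auto
  from partial_y[OF this, of UNIV] show ?thesis
    by (intro grad_y_eq) simp
qed

lemma grad_diff_le:
  fixes c :: "'a::euclidean_space \<Rightarrow> 'a \<Rightarrow> real"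
  assumes d1: "\<forall>z\<in>X \<times> Y. ((\<lambda>(x, y). c x y) has_derivative blinfun_apply (g' z)) (at z)"
    and "x \<in> X" "w \<in> Y" "x' \<in> X" "w' \<in> Y"
  shows "norm (grad_y c x w - grad_y c x' w') \<le> norm (g' (x, w) - g' (x', w'))"
proof -
  define v where "v = grad_y c x w - grad_y c x' w'"
  have "(norm v)\<^sup>2 = grad_y c x w \<bullet> v - grad_y c x' w' \<bullet> v"
    by (simp add: v_def power2_norm_eq_inner inner_diff_left)
  also have "\<dots> = blinfun_apply (g' (x, w) - g' (x', w')) (0, v)"
    using grad_repr[OF d1] assms by (simp add: blinfun.diff_left)
  also have "\<dots> \<le> norm (g' (x, w) - g' (x', w')) * norm ((0::'a), v)"
    by (rule order_trans[OF abs_ge_self], metis norm_blinfun real_norm_def)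
  also have "\<dots> = norm (g' (x, w) - g' (x', w')) * norm v" by simp
  finally have *: "norm v * norm v \<le> norm (g' (x, w) - g' (x', w')) * norm v"
    by (simp add: power2_eq_square)
  show ?thesis
  proof (cases "norm v = 0")
    case True then show ?thesis by (simp add: v_def)
  next
    case False then have "norm v > 0" by simp
    with * show ?thesis unfolding v_def[symmetric] by (simp add: mult_le_cancel_right)
  qed
qed

lemma taylor_y:
  fixes c :: "'a::euclidean_space \<Rightarrow> 'a \<Rightarrow> real"
  assumes d1: "\<forall>z\<in>X \<times> Y. ((\<lambda>(x, y). c x y) has_derivative blinfun_apply (g' z)) (at z)"
    and x: "x \<in> X" and seg: "closed_segment y z \<subseteq> Y"
    and lip: "\<And>w. w \<in> closed_segment y z \<Longrightarrow> norm (g' (x, w) - g' (x, y)) \<le> M * norm (w - y)"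
    and M: "M \<ge> 0"
  shows "\<bar>c x z - c x y - grad_y c x y \<bullet> (z - y)\<bar> \<le> M * (norm (z - y))\<^sup>2"
proof -
  have yY: "y \<in> Y" using seg by auto
  have "norm (c x z - c x y - (\<lambda>k. blinfun_apply (g' (x, y)) (0, k)) (z - y)) \<le> norm (z - y) * (M * norm (z - y))"
  proof (rule differentiable_bound_linearization[where S = "closed_segment y z" and f' = "\<lambda>w k. blinfun_apply (g' (x, w)) (0, k)"])
    fix t :: real assume "t \<in> {0..1}"
    then show "y + t *\<^sub>R (z - y) \<in> closed_segment y z"
      by (auto simp: closed_segment_def algebra_simps intro!: exI[of _ t])
  next
    fix w assume w: "w \<in> closed_segment y z"
    then have "((\<lambda>(x, y). c x y) has_derivative blinfun_apply (g' (x, w))) (at (x, w))"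
      using d1 x seg by auto
    from partial_y[OF this] show "(c x has_derivative (\<lambda>k. blinfun_apply (g' (x, w)) (0, k))) (at w within closed_segment y z)" .
    show "onorm ((\<lambda>k. blinfun_apply (g' (x, w)) (0, k)) - (\<lambda>k. blinfun_apply (g' (x, y)) (0, k))) \<le> M * norm (z - y)"
    proof (rule onorm_le)
      fix k :: 'a
      have "norm (((\<lambda>k. blinfun_apply (g' (x, w)) (0, k)) - (\<lambda>k. blinfun_apply (g' (x, y)) (0, k))) k)
          = norm (blinfun_apply (g' (x, w) - g' (x, y)) (0, k))"
        by (simp add: blinfun.diff_left)
      also have "\<dots> \<le> norm (g' (x, w) - g' (x, y)) * norm ((0::'a), k)" by (rule norm_blinfun)
      also have "\<dots> = norm (g' (x, w) - g' (x, y)) * norm k" by simp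
      also have "\<dots> \<le> (M * norm (w - y)) * norm k" by (intro mult_right_mono lip w) simp
      also have "\<dots> \<le> (M * norm (z - y)) * norm k"
        using dist_in_closed_segment[OF w] M
        by (intro mult_right_mono mult_left_mono) (auto simp: dist_norm norm_minus_commute)
      finally show "norm (((\<lambda>k. blinfun_apply (g' (x, w)) (0, k)) - (\<lambda>k. blinfun_apply (g' (x, y)) (0, k))) k) \<le> M * norm (z - y) * norm k" .
    qed
  qed auto
  moreover have "grad_y c x y \<bullet> (z - y) = blinfun_apply (g' (x, y)) (0, z - y)"
    using grad_repr[OF d1 x yY] .
  ultimately show ?thesis by (simp add: power2_eq_square mult_ac)
qed

lemma norm_sq_expand:
  fixes y z :: "'a::real_inner"
  shows "(norm z)\<^sup>2 = (norm y)\<^sup>2 + 2 * (y \<bullet> (z - y)) + (norm (z - y))\<^sup>2"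
  by (simp add: power2_norm_eq_inner inner_diff_left inner_diff_right inner_commute algebra_simps)

lemma key_estimate:
  fixes c :: "'a::euclidean_space \<Rightarrow> 'a \<Rightarrow> real" and f :: "'a \<Rightarrow> real"
    and g' :: "('a \<times> 'a) \<Rightarrow> ('a \<times> 'a) \<Rightarrow>\<^sub>L real"
    and g'' :: "('a \<times> 'a) \<Rightarrow> ('a \<times> 'a) \<Rightarrow>\<^sub>L (('a \<times> 'a) \<Rightarrow>\<^sub>L real)"
  assumes Yo: "open Y"
    and d1: "\<forall>z\<in>X \<times> Y. ((\<lambda>(x, y). c x y) has_derivative blinfun_apply (g' z)) (at z)"
    and d2: "\<forall>z\<in>X \<times> Y. (g' has_derivative blinfun_apply (g'' z)) (at z)"
    and cont: "continuous_on (X \<times> Y) g''"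
    and conv: "convex_on Y (\<lambda>y. f y - lam / 2 * (norm y)\<^sup>2)"
    and inv: "\<forall>y\<in>Y. \<exists>g. (\<forall>x\<in>X. g (grad_y c x y) = x) \<and> L-lipschitz_on ((\<lambda>x. grad_y c x y) ` X) g"
    and K: "compact K" "K \<subseteq> X" and y0: "y0 \<in> Y"
  shows "\<exists>r>0. \<exists>B. \<forall>x y x' y'. x \<in> K \<longrightarrow> x' \<in> K \<longrightarrow> y \<in> ball y0 r \<longrightarrow> y' \<in> ball y0 r \<longrightarrow>
     (\<forall>z\<in>Y. f z - c x z \<le> f y - c x y) \<longrightarrow> (\<forall>z\<in>Y. f z - c x' z \<le> f y' - c x' y') \<longrightarrow>
     norm (x - x') \<le> B * norm (y - y')"
proof -
  obtain e where e: "e > 0" "cball y0 e \<subseteq> Y" using open_contains_cball Yo y0 by blast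
  define r where "r = e / 5"
  have r: "r > 0" using e by (simp add: r_def)
  define W where "W = cball y0 e"
  have WY: "W \<subseteq> Y" using e by (simp add: W_def)
  obtain M2 where M2: "M2 \<ge> 0" "\<And>x w1 w2. x \<in> K \<Longrightarrow> w1 \<in> W \<Longrightarrow> w2 \<in> W \<Longrightarrow>
      norm (g' (x, w1) - g' (x, w2)) \<le> M2 * norm (w1 - w2)"
    using grad_lip[OF d2 cont K, of W] WY by (auto simp: W_def)
  define F where "F = (\<lambda>y. f y - lam / 2 * (norm y)\<^sup>2)"
  define M where "M = M2 + \<bar>lam\<bar>"
  have M0: "M \<ge> 0" using M2 by (simp add: M_def)
  define p where "p = (\<lambda>x y. grad_y c x y - lam *\<^sub>R y)"
  have up: "F z \<le> F y + p x y \<bullet> (z - y) + M * (norm (z - y))\<^sup>2"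
    if x: "x \<in> K" and y: "y \<in> W" and R: "\<forall>z\<in>Y. f z - c x z \<le> f y - c x y" and z: "z \<in> W" for x y z
  proof -
    have seg: "closed_segment y z \<subseteq> W" using y z by (intro closed_segment_subset) (auto simp: W_def)
    have xX: "x \<in> X" using x K by auto
    have tay: "\<bar>c x z - c x y - grad_y c x y \<bullet> (z - y)\<bar> \<le> M2 * (norm (z - y))\<^sup>2"
      by (rule taylor_y[OF d1 xX]) (use seg WY M2 y x in \<open>auto\<close>)
    have fz: "f z - f y \<le> c x z - c x y" using R z WY by force
    have nz: "(norm z)\<^sup>2 = (norm y)\<^sup>2 + 2 * (y \<bullet> (z - y)) + (norm (z - y))\<^sup>2" by (rule norm_sq_expand)
    have pz: "p x y \<bullet> (z - y) = grad_y c x y \<bullet> (z - y) - lam * (y \<bullet> (z - y))"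
      by (simp add: p_def inner_diff_left)
    have pos: "0 \<le> (\<bar>lam\<bar> + lam / 2) * (norm (z - y))\<^sup>2" by simp
    have e2: "lam / 2 * (norm z)\<^sup>2 = lam / 2 * (norm y)\<^sup>2 + lam * (y \<bullet> (z - y)) + lam / 2 * (norm (z - y))\<^sup>2"
      by (subst nz) (simp add: algebra_simps)
    have e3: "(M2 + \<bar>lam\<bar>) * (norm (z - y))\<^sup>2 = M2 * (norm (z - y))\<^sup>2 + \<bar>lam\<bar> * (norm (z - y))\<^sup>2"
      by (simp add: distrib_right)
    have pos': "0 \<le> \<bar>lam\<bar> * (norm (z - y))\<^sup>2 + lam / 2 * (norm (z - y))\<^sup>2"
      using pos by (simp add: distrib_right)
    have tay': "c x z - c x y \<le> grad_y c x y \<bullet> (z - y) + M2 * (norm (z - y))\<^sup>2"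
      using tay by (simp add: abs_le_iff)
    show ?thesis unfolding F_def M_def pz e2 e3
      using tay' fz pos' by linarith
  qed
  have low: "F y + p x y \<bullet> (z - y) \<le> F z"
    if x: "x \<in> K" and y: "y \<in> ball y0 r" and R: "\<forall>z\<in>Y. f z - c x z \<le> f y - c x y" and z: "z \<in> Y" for x y z
  proof (rule conv_support[where \<rho> = "4 * r" and M = M])
    show "convex_on Y F" using conv by (simp add: F_def)
    have bW: "ball y (4 * r) \<subseteq> W"
    proof
      fix w assume "w \<in> ball y (4 * r)"
      then have "dist y0 w \<le> dist y0 y + dist y w" "dist y0 y < r" "dist y w < 4 * r"
        using y dist_triangle by auto
      then show "w \<in> W" by (simp add: W_def r_def)
    qed
    then show "ball y (4 * r) \<subseteq> Y" using WY by auto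
    have "y \<in> ball y (4 * r)" using r by simp
    then show "y \<in> Y" using bW WY by blast
    show "0 < 4 * r" using r by simp
    have yW: "y \<in> W" using y r by (auto simp: W_def r_def)
    fix w assume "w \<in> ball y (4 * r)"
    then show "F w \<le> F y + p x y \<bullet> (w - y) + M * (norm (w - y))\<^sup>2"
      using up[OF x yW R] bW by auto
  qed (use z in auto)
  obtain B where B: "B = L * (4 * M + \<bar>lam\<bar> + M2)" by simp
  have main: "norm (x - x') \<le> B * norm (y - y')"
    if x: "x \<in> K" and x': "x' \<in> K" and y: "y \<in> ball y0 r" and y': "y' \<in> ball y0 r"
      and R: "\<forall>z\<in>Y. f z - c x z \<le> f y - c x y" and R': "\<forall>z\<in>Y. f z - c x' z \<le> f y' - c x' y'"
    for x y x' y'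
  proof -
    define d where "d = norm (y - y')"
    define q where "q = p x' y' - p x y"
    have yW: "y \<in> W" and y'W: "y' \<in> W" using y y' r by (auto simp: W_def r_def)
    have yY: "y \<in> Y" and y'Y: "y' \<in> Y" using yW y'W WY by auto
    have d2r: "d < 2 * r"
    proof -
      have "dist y y' \<le> dist y y0 + dist y0 y'" by (rule dist_triangle)
      then show ?thesis using y y' by (simp add: d_def dist_norm dist_commute norm_minus_commute)
    qed
    have qz: "q \<bullet> (z - y') \<le> M * (norm (z - y))\<^sup>2" if z: "z \<in> W" for z
    proof -
      have zY: "z \<in> Y" using z WY by auto
      have a: "F y' + p x' y' \<bullet> (z - y') \<le> F z" using low[OF x' y' R' zY] .
      have b: "F z \<le> F y + p x y \<bullet> (z - y) + M * (norm (z - y))\<^sup>2" using up[OF x yW R z] .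
      have c: "F y + p x y \<bullet> (y' - y) \<le> F y'" using low[OF x y R y'Y] .
      show ?thesis using a b c unfolding q_def
        by (simp add: inner_diff_left inner_diff_right algebra_simps)
    qed
    have qb: "norm q \<le> 4 * M * d"
    proof (cases "q = 0")
      case True then show ?thesis using M0 by (simp add: d_def)
    next
      case False
      define u where "u = q /\<^sub>R norm q"
      have nq: "norm q > 0" using False by simp
      have qu: "q \<bullet> u = norm q" using nq by (simp add: u_def power2_norm_eq_inner[symmetric] power2_eq_square)
      have nu: "norm u = 1" using nq by (simp add: u_def)
      show ?thesis
      proof (cases "d = 0")
        case True
        then have yy: "y' = y" by (simp add: d_def)
        have "norm q \<le> 0"
        proof (rule eps_le[where e = "4 * r" and C = M])
          show "0 < 4 * r" using r by simp
          fix s :: real assume s: "0 < s" "s < 4 * r"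
          define z where "z = y + s *\<^sub>R u"
          have "dist y0 z \<le> dist y0 y + dist y z" by (rule dist_triangle)
          moreover have "dist y z = s" using s nu by (simp add: z_def dist_norm)
          ultimately have "z \<in> W" using y s by (simp add: W_def r_def)
          from qz[OF this] have "s * norm q \<le> M * s\<^sup>2"
            using s nu qu by (simp add: z_def yy)
          then have "s * norm q \<le> s * (0 + M * s)" by (simp add: power2_eq_square algebra_simps)
          then show "norm q \<le> 0 + M * s" using s by simp
        qed
        then show ?thesis using nq by simp
      next
        case False
        then have dp: "d > 0" by (simp add: d_def)
        define z where "z = y + (2 * d) *\<^sub>R u"
        have "dist y0 z \<le> dist y0 y + dist y z" by (rule dist_triangle)
        moreover have "dist y z = 2 * d" using dp nu by (simp add: z_def dist_norm)
        ultimately have "z \<in> W" using y d2r by (simp add: W_def r_def)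
        from qz[OF this] have i1: "q \<bullet> (y - y') + 2 * d * norm q \<le> M * (2 * d)\<^sup>2"
          using dp nu qu by (simp add: z_def inner_diff_right inner_add_right algebra_simps)
        have cs: "- (norm q * d) \<le> q \<bullet> (y - y')"
          using Cauchy_Schwarz_ineq2[of q "y - y'"] by (simp add: d_def abs_le_iff)
        have "d * norm q \<le> d * (4 * M * d)" using i1 cs by (simp add: power2_eq_square algebra_simps)
        then show ?thesis using dp by simp
      qed
    qed
    have xX: "x \<in> X" and x'X: "x' \<in> X" using x x' K by auto
    have g1: "norm (grad_y c x y - grad_y c x' y') \<le> norm q + \<bar>lam\<bar> * d"
    proof -
      have "grad_y c x y - grad_y c x' y' = - q + lam *\<^sub>R (y - y')"
        by (simp add: q_def p_def algebra_simps)
      then have "norm (grad_y c x y - grad_y c x' y') \<le> norm (- q) + norm (lam *\<^sub>R (y - y'))"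
        by (metis norm_triangle_ineq)
      then show ?thesis by (simp add: d_def)
    qed
    have g2: "norm (grad_y c x' y' - grad_y c x' y) \<le> M2 * d"
      using order_trans[OF grad_diff_le[OF d1 x'X y'Y x'X yY] M2(2)[OF x' y'W yW]]
      by (simp add: d_def norm_minus_commute)
    have gd: "norm (grad_y c x y - grad_y c x' y) \<le> (4 * M + \<bar>lam\<bar> + M2) * d"
    proof -
      have "norm (grad_y c x y - grad_y c x' y) \<le> norm (grad_y c x y - grad_y c x' y') + norm (grad_y c x' y' - grad_y c x' y)"
        by (rule norm_diff_triangle_le) auto
      then show ?thesis using g1 g2 qb by (simp add: algebra_simps)
    qed
    obtain g where g: "\<forall>x\<in>X. g (grad_y c x y) = x" "L-lipschitz_on ((\<lambda>x. grad_y c x y) ` X) g"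
      using inv yY by blast
    have "dist (g (grad_y c x y)) (g (grad_y c x' y)) \<le> L * dist (grad_y c x y) (grad_y c x' y)"
      using g(2) xX x'X by (intro lipschitz_onD) auto
    then have "norm (x - x') \<le> L * norm (grad_y c x y - grad_y c x' y)"
      using g(1) xX x'X by (simp add: dist_norm)
    also have "\<dots> \<le> L * ((4 * M + \<bar>lam\<bar> + M2) * d)"
      using gd lipschitz_on_nonneg[OF g(2)] by (intro mult_left_mono) auto
    finally have fin: "norm (x - x') \<le> B * norm (y - y')" by (simp add: B d_def mult_ac)
    then show "norm (x - x') \<le> B * norm (y - y')" .
  qed
  show ?thesis using r main by blast
qed

lemma core_negl:
  fixes c :: "'a::euclidean_space \<Rightarrow> 'a \<Rightarrow> real" and f :: "'a \<Rightarrow> real"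
    and g' :: "('a \<times> 'a) \<Rightarrow> ('a \<times> 'a) \<Rightarrow>\<^sub>L real"
    and g'' :: "('a \<times> 'a) \<Rightarrow> ('a \<times> 'a) \<Rightarrow>\<^sub>L (('a \<times> 'a) \<Rightarrow>\<^sub>L real)"
  assumes Yo: "open Y"
    and d1: "\<forall>z\<in>X \<times> Y. ((\<lambda>(x, y). c x y) has_derivative blinfun_apply (g' z)) (at z)"
    and d2: "\<forall>z\<in>X \<times> Y. (g' has_derivative blinfun_apply (g'' z)) (at z)"
    and cont: "continuous_on (X \<times> Y) g''"
    and conv: "convex_on Y (\<lambda>y. f y - lam / 2 * (norm y)\<^sup>2)"
    and inv: "\<forall>y\<in>Y. \<exists>g. (\<forall>x\<in>X. g (grad_y c x y) = x) \<and> L-lipschitz_on ((\<lambda>x. grad_y c x y) ` X) g"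
    and K: "compact K" "K \<subseteq> X" and E: "negligible E" "E \<subseteq> Y"
  shows "negligible (fst ` {(x, y). x \<in> K \<and> y \<in> E \<and> (\<forall>z\<in>Y. f z - c x z \<le> f y - c x y)})"
proof -
  define Rl where "Rl = (\<lambda>x y. x \<in> K \<and> (\<forall>z\<in>Y. f z - c x z \<le> f y - c x y))"
  define S where "S = {y\<in>E. \<exists>x. Rl x y}"
  define \<sigma> where "\<sigma> = (\<lambda>y. SOME x. Rl x y)"
  have loc: "\<exists>r>0. \<exists>B. \<forall>x y1 x' y'. Rl x y1 \<longrightarrow> Rl x' y' \<longrightarrow> y1 \<in> ball y r \<longrightarrow> y' \<in> ball y r \<longrightarrow>
      norm (x - x') \<le> B * norm (y1 - y')" if "y \<in> Y" for y
    using key_estimate[OF Yo d1 d2 cont conv inv K that] unfolding Rl_def by blast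
  have \<sigma>: "Rl (\<sigma> y) y" if "y \<in> S" for y
    using that unfolding S_def \<sigma>_def by (auto intro: someI)
  have uniq: "x = x'" if h: "Rl x y" "Rl x' y" "y \<in> Y" for x x' y
  proof -
    obtain r B where "r > 0" and rB: "\<forall>x y1 x' y'. Rl x y1 \<longrightarrow> Rl x' y' \<longrightarrow> y1 \<in> ball y r \<longrightarrow> y' \<in> ball y r \<longrightarrow>
      norm (x - x') \<le> B * norm (y1 - y')" using loc[OF h(3)] by blast
    then have "norm (x - x') \<le> B * norm (y - y)" using h \<open>r > 0\<close> by (intro rB[rule_format]) auto
    then show ?thesis by simp
  qed
  have sub: "fst ` {(x, y). x \<in> K \<and> y \<in> E \<and> (\<forall>z\<in>Y. f z - c x z \<le> f y - c x y)} \<subseteq> \<sigma> ` S"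
  proof
    fix x assume "x \<in> fst ` {(x, y). x \<in> K \<and> y \<in> E \<and> (\<forall>z\<in>Y. f z - c x z \<le> f y - c x y)}"
    then obtain y where xy: "Rl x y" "y \<in> E" by (auto simp: Rl_def)
    then have yS: "y \<in> S" by (auto simp: S_def)
    have "\<sigma> y = x" using uniq[OF \<sigma>[OF yS] xy(1)] xy(2) E(2) by auto
    then show "x \<in> \<sigma> ` S" using yS by blast
  qed
  have "negligible (\<sigma> ` S)"
  proof (rule negligible_locally_Lipschitz_image)
    show "negligible S" using E(1) by (rule negligible_subset) (auto simp: S_def)
    fix y assume yS: "y \<in> S"
    then have yY: "y \<in> Y" using E(2) by (auto simp: S_def)
    obtain r B where "r > 0" and rB: "\<forall>x y1 x' y'. Rl x y1 \<longrightarrow> Rl x' y' \<longrightarrow> y1 \<in> ball y r \<longrightarrow> y' \<in> ball y r \<longrightarrow>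
      norm (x - x') \<le> B * norm (y1 - y')" using loc[OF yY] by blast
    show "\<exists>T B. open T \<and> y \<in> T \<and> (\<forall>y'\<in>S \<inter> T. norm (\<sigma> y' - \<sigma> y) \<le> B * norm (y' - y))"
    proof (intro exI[of _ "ball y r"] exI[of _ B] conjI ballI)
      show "open (ball y r)" by simp
      show "y \<in> ball y r" using \<open>r > 0\<close> by simp
      fix y' assume "y' \<in> S \<inter> ball y r"
      then show "norm (\<sigma> y' - \<sigma> y) \<le> B * norm (y' - y)"
        using rB \<sigma>[OF yS] \<sigma>[of y'] \<open>r > 0\<close> by auto
    qed
  qed simp
  then show ?thesis using sub negligible_subset by blast
qed



lemma fst_borel: "fst \<in> borel_measurable (borel :: ('a::topological_space \<times> 'b::topological_space) measure)"
  by (intro borel_measurable_continuous_onI continuous_intros)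

lemma snd_borel: "snd \<in> borel_measurable (borel :: ('a::topological_space \<times> 'b::topological_space) measure)"
  by (intro borel_measurable_continuous_onI continuous_intros)

lemma times_borel:
  fixes A :: "'a::topological_space set" and B :: "'b::topological_space set"
  assumes "A \<in> sets borel" "B \<in> sets borel"
  shows "A \<times> B \<in> sets borel"
proof -
  have "fst -` A \<inter> space borel \<in> sets (borel :: ('a \<times> 'b) measure)"
    using measurable_sets[OF fst_borel assms(1)] .
  moreover have "snd -` B \<inter> space borel \<in> sets (borel :: ('a \<times> 'b) measure)"
    using measurable_sets[OF snd_borel assms(2)] .
  ultimately have "(fst -` A \<inter> space borel) \<inter> (snd -` B \<inter> space borel) \<in> sets (borel :: ('a \<times> 'b) measure)"
    by blast
  moreover have "(fst -` A \<inter> space borel) \<inter> (snd -` B \<inter> space borel) = A \<times> B" by auto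
  ultimately show ?thesis by simp
qed

lemma marg_fst:
  fixes \<pi> :: "('a::topological_space \<times> 'b::topological_space) measure"
  assumes "sets \<pi> = sets borel" "distr \<pi> borel fst = \<mu>" "A \<in> sets borel"
  shows "emeasure \<mu> A = emeasure \<pi> (A \<times> UNIV)"
proof -
  have m: "fst \<in> measurable \<pi> borel" using fst_borel measurable_cong_sets[OF assms(1) refl] by blast
  have sp: "space \<pi> = UNIV" using sets_eq_imp_space_eq[OF assms(1)] by simp
  have "emeasure \<mu> A = emeasure \<pi> (fst -` A \<inter> space \<pi>)"
    using emeasure_distr[OF m, of A] assms by simp
  also have "fst -` A \<inter> space \<pi> = A \<times> UNIV" using sp by auto
  finally show ?thesis .
qed

lemma marg_snd:
  fixes \<pi> :: "('a::topological_space \<times> 'b::topological_space) measure"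
  assumes "sets \<pi> = sets borel" "distr \<pi> borel snd = \<nu>" "A \<in> sets borel"
  shows "emeasure \<nu> A = emeasure \<pi> (UNIV \<times> A)"
proof -
  have m: "snd \<in> measurable \<pi> borel" using snd_borel measurable_cong_sets[OF assms(1) refl] by blast
  have sp: "space \<pi> = UNIV" using sets_eq_imp_space_eq[OF assms(1)] by simp
  have "emeasure \<nu> A = emeasure \<pi> (snd -` A \<inter> space \<pi>)"
    using emeasure_distr[OF m, of A] assms by simp
  also have "snd -` A \<inter> space \<pi> = UNIV \<times> A" using sp by auto
  finally show ?thesis .
qed

lemma gamma_compact:
  fixes c :: "'a::euclidean_space \<Rightarrow> 'a \<Rightarrow> real"
  assumes K: "compact K1" "compact K2" "K1 \<subseteq> X" "K2 \<subseteq> Y"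
    and cc: "continuous_on (X \<times> Y) (\<lambda>z. c (fst z) (snd z))" and fc: "continuous_on Y f"
  shows "compact {(x, y). x \<in> K1 \<and> y \<in> K2 \<and> ereal (c x y - f y - \<delta>) \<le> ctrans Y c f x}"
proof -
  define S where "S = K1 \<times> K2"
  define h where "h = (\<lambda>z p. c (fst p) z - f z - (c (fst p) (snd p) - f (snd p) - \<delta>))"
  have eq: "{(x, y). x \<in> K1 \<and> y \<in> K2 \<and> ereal (c x y - f y - \<delta>) \<le> ctrans Y c f x}
      = S \<inter> (\<Inter>z\<in>Y. S \<inter> h z -` {0..})"
    by (auto simp: S_def h_def ctrans_def le_INF_iff)
  have cS: "compact S" using K by (simp add: S_def compact_Times)
  have hc: "continuous_on S (h z)" if z: "z \<in> Y" for z
  proof -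
    have i1: "continuous_on S (\<lambda>p. (fst p, z))" by (intro continuous_intros)
    have i2: "(\<lambda>p. (fst p, z)) ` S \<subseteq> X \<times> Y" using K z by (auto simp: S_def)
    have c1: "continuous_on S (\<lambda>p. c (fst p) z)"
      using continuous_on_compose2[OF cc i1 i2] by simp
    have c2: "continuous_on S (\<lambda>p. c (fst p) (snd p))"
      using continuous_on_subset[OF cc, of "K1 \<times> K2"] K by (auto simp: S_def)
    have j1: "continuous_on S snd" by (intro continuous_intros)
    have j2: "snd ` S \<subseteq> Y" using K by (auto simp: S_def)
    have c3: "continuous_on S (\<lambda>p. f (snd p))"
      using continuous_on_compose2[OF fc j1 j2] by simp
    show ?thesis unfolding h_def using c1 c2 c3 by (intro continuous_intros)
  qed
  have "closed (\<Inter>z\<in>Y. S \<inter> h z -` {0..})"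
    using hc cS compact_imp_closed by (intro closed_INT ballI continuous_closed_preimage) auto
  then show ?thesis unfolding eq using cS compact_Int_closed by blast
qed



lemma enn2real_lt: "x < ennreal r \<Longrightarrow> enn2real x < r"
  by (cases x rule: ennreal_cases) (auto simp: ennreal_less_iff)

lemma ereal_real_le:
  assumes "\<bar>t\<bar> \<noteq> \<infinity>" "t \<le> ereal a"
  shows "real_of_ereal t \<le> a"
  using assms by (cases t) auto

lemma ereal_seq_le:
  fixes t :: ereal
  assumes "\<And>n::nat. ereal (a - 1 / Suc n) \<le> t" "t \<le> ereal b"
  shows "a \<le> b"
proof (rule ccontr)
  assume "\<not> a \<le> b"
  then have "a - b > 0" by simp
  then obtain n where n: "inverse (real (Suc n)) < a - b" using reals_Archimedean by blast
  have "ereal (a - 1 / Suc n) \<le> ereal b" using assms(1)[of n] assms(2) by (rule order_trans)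
  then have "a - 1 / Suc n \<le> b" by simp
  with n show False by (simp add: field_simps)
qed

lemma meas_borel_to:
  assumes "sets M = sets borel" "f \<in> measurable borel N"
  shows "f \<in> measurable M N"
  using measurable_cong_sets[OF assms(1) refl, of N] assms(2) by simp

lemma meas_borel_from:
  assumes "sets M = sets borel" "f \<in> measurable M N"
  shows "f \<in> measurable borel N"
  using measurable_cong_sets[OF assms(1) refl, of N] assms(2) by simp



lemma piece_null:
  fixes X Y :: "'a::euclidean_space set" and c :: "'a \<Rightarrow> 'a \<Rightarrow> real" and f :: "'a \<Rightarrow> real"
    and g' :: "('a \<times> 'a) \<Rightarrow> ('a \<times> 'a) \<Rightarrow>\<^sub>L real"
    and g'' :: "('a \<times> 'a) \<Rightarrow> ('a \<times> 'a) \<Rightarrow>\<^sub>L (('a \<times> 'a) \<Rightarrow>\<^sub>L real)"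
    and \<mu> \<nu> :: "'a measure"
  assumes Xo: "open X" and Yo: "open Y"
    and d1: "\<forall>z\<in>X \<times> Y. ((\<lambda>(x, y). c x y) has_derivative blinfun_apply (g' z)) (at z)"
    and d2: "\<forall>z\<in>X \<times> Y. (g' has_derivative blinfun_apply (g'' z)) (at z)"
    and cont: "continuous_on (X \<times> Y) g''"
    and conv: "convex_on Y (\<lambda>y. f y - lam / 2 * (norm y)\<^sup>2)"
    and inv: "\<forall>y\<in>Y. \<exists>g. (\<forall>x\<in>X. g (grad_y c x y) = x) \<and> L-lipschitz_on ((\<lambda>x. grad_y c x y) ` X) g"
    and mu: "prob_space \<mu>" "sets \<mu> = sets borel" "emeasure \<mu> X = 1"
    and nu: "prob_space \<nu>" "sets \<nu> = sets borel" "emeasure \<nu> Y = 1"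
    and ac: "absolutely_continuous lborel \<mu>"
    and c0: "\<forall>x\<in>X. \<forall>y\<in>Y. 0 \<le> c x y"
    and AEg: "AE x in \<mu>. x \<in> X \<longrightarrow> \<bar>ctrans Y c f x\<bar> \<noteq> \<infinity>"
    and Gdef: "G = (\<lambda>x. indicator X x *\<^sub>R real_of_ereal (ctrans Y c f x))"
    and Fdef: "Fn = (\<lambda>y. indicator Y y *\<^sub>R f y)"
    and intG: "integrable \<mu> G" and intF: "integrable \<nu> Fn"
    and KcD: "Kc X Y c \<mu> \<nu> = ennreal D" and D0: "D \<ge> 0"
    and Ddef: "D = integral\<^sup>L \<mu> G + integral\<^sup>L \<nu> Fn"
    and K2: "compact K2" "K2 \<subseteq> Y" "negligible K2"
  shows "emeasure \<nu> K2 = 0"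
proof -
  interpret mu: prob_space \<mu> by (rule mu(1))
  interpret nu: prob_space \<nu> by (rule nu(1))
  have spmu: "space \<mu> = UNIV" using sets_eq_imp_space_eq[OF mu(2)] by simp
  have spnu: "space \<nu> = UNIV" using sets_eq_imp_space_eq[OF nu(2)] by simp
  define g where "g = ctrans Y c f"
  have cfun: "(\<lambda>(x, y). c x y) = (\<lambda>z. c (fst z) (snd z))" by (simp add: case_prod_unfold)
  have cc: "continuous_on (X \<times> Y) (\<lambda>z. c (fst z) (snd z))"
  proof (rule continuous_at_imp_continuous_on, rule ballI)
    fix z assume "z \<in> X \<times> Y"
    then have "((\<lambda>(x, y). c x y) has_derivative blinfun_apply (g' z)) (at z)" using d1 by blast
    from has_derivative_continuous[OF this] show "isCont (\<lambda>z. c (fst z) (snd z)) z" by (simp add: cfun)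
  qed
  have fc: "continuous_on Y f"
  proof -
    have "continuous_on Y (\<lambda>y. f y - lam / 2 * (norm y)\<^sup>2)" by (rule convex_on_continuous[OF Yo conv])
    moreover have "continuous_on Y (\<lambda>y. lam / 2 * (norm y)\<^sup>2)" by (intro continuous_intros)
    ultimately have "continuous_on Y (\<lambda>y. (f y - lam / 2 * (norm y)\<^sup>2) + lam / 2 * (norm y)\<^sup>2)"
      by (rule continuous_on_add)
    then show ?thesis by simp
  qed
  have main: "measure \<nu> K2 \<le> 0 + 3 * \<epsilon>" if \<epsilon>: "0 < \<epsilon>" "\<epsilon> < 1" for \<epsilon> :: real
  proof -
    have Xb: "X \<in> sets borel" using Xo by simp
    have "emeasure \<mu> X = (SUP K \<in> {K. K \<subseteq> X \<and> compact K}. emeasure \<mu> K)"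
      by (rule inner_regular[OF mu(2)]) (auto simp: Xb)
    moreover have "ennreal (1 - \<epsilon>) < 1" using \<epsilon> by (subst ennreal_1[symmetric], subst ennreal_less_iff) auto
    ultimately have "ennreal (1 - \<epsilon>) < (SUP K \<in> {K. K \<subseteq> X \<and> compact K}. emeasure \<mu> K)" using mu(3) by simp
    then obtain K1 where K1: "K1 \<subseteq> X" "compact K1" "ennreal (1 - \<epsilon>) < emeasure \<mu> K1"
      by (auto simp: less_SUP_iff)
    have K1b: "K1 \<in> sets borel" using K1(2) by (simp add: compact_imp_closed)
    have "1 - \<epsilon> < measure \<mu> K1" using K1(3) \<epsilon> by (simp add: mu.emeasure_eq_measure ennreal_less_iff)
    moreover have "measure \<mu> (UNIV - K1) = 1 - measure \<mu> K1"
      using mu.prob_compl[of K1] K1b mu(2) spmu by simp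
    ultimately have mK1: "measure \<mu> (UNIV - K1) < \<epsilon>" by simp
    define \<Gamma> where "\<Gamma> = (\<lambda>n::nat. {(x, y). x \<in> K1 \<and> y \<in> K2 \<and> ereal (c x y - f y - 1 / Suc n) \<le> g x})"
    define P where "P = (\<lambda>n. fst ` \<Gamma> n)"
    have G\<Gamma>: "compact (\<Gamma> n)" for n
      unfolding \<Gamma>_def g_def by (rule gamma_compact[OF K1(2) K2(1) K1(1) K2(2) cc fc])
    have cP: "compact (P n)" for n
      unfolding P_def by (intro compact_continuous_image continuous_intros G\<Gamma>)
    have \<Gamma>mono: "\<Gamma> n \<subseteq> \<Gamma> m" if "m \<le> n" for m n
    proof
      fix z assume "z \<in> \<Gamma> n"
      moreover have "1 / real (Suc n) \<le> 1 / Suc m" using that by (simp add: frac_le)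
      ultimately show "z \<in> \<Gamma> m" unfolding \<Gamma>_def by (auto elim!: order_trans[rotated])
    qed
    have decP: "decseq P" unfolding decseq_def P_def using \<Gamma>mono by (meson image_mono)
    have inter: "(\<Inter>n. P n) \<subseteq> fst ` {(x, y). x \<in> K1 \<and> y \<in> K2 \<and> (\<forall>z\<in>Y. f z - c x z \<le> f y - c x y)}"
    proof
      fix x assume x: "x \<in> (\<Inter>n. P n)"
      define A where "A = (\<lambda>n. snd ` (\<Gamma> n \<inter> ({x} \<times> UNIV)))"
      have "compact (A n)" for n
        unfolding A_def using G\<Gamma>[of n]
        by (intro compact_continuous_image continuous_intros compact_Int_closed closed_Times) auto
      moreover have "A n \<noteq> {}" for n
      proof -
        have "x \<in> P n" using x by blast
        then obtain y where "(x, y) \<in> \<Gamma> n" by (auto simp: P_def)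
        then show ?thesis by (auto simp: A_def)
      qed
      moreover have "A n \<subseteq> A m" if "m \<le> n" for m n
        using \<Gamma>mono[OF that] by (auto simp: A_def)
      ultimately have "\<Inter>(range A) \<noteq> {}" by (rule compact_nest)
      then obtain y where "y \<in> \<Inter>(range A)" by blast
      then have y: "(x, y) \<in> \<Gamma> n" for n by (auto simp: A_def)
      have xK: "x \<in> K1" and yK: "y \<in> K2" using y[of 0] by (auto simp: \<Gamma>_def)
      have "f z - c x z \<le> f y - c x y" if z: "z \<in> Y" for z
      proof -
        have "g x \<le> ereal (c x z - f z)" unfolding g_def ctrans_def using z by (rule INF_lower)
        moreover have "ereal (c x y - f y - 1 / Suc n) \<le> g x" for n using y[of n] by (auto simp: \<Gamma>_def)
        ultimately have "c x y - f y \<le> c x z - f z" using ereal_seq_le by metis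
        then show ?thesis by simp
      qed
      then show "x \<in> fst ` {(x, y). x \<in> K1 \<and> y \<in> K2 \<and> (\<forall>z\<in>Y. f z - c x z \<le> f y - c x y)}"
        using xK yK by force
    qed
    have negI: "negligible (\<Inter>n. P n)"
      using negligible_subset[OF core_negl[OF Yo d1 d2 cont conv inv K1(2) K1(1) K2(3) K2(2)] inter] .
    have Pb: "P n \<in> sets borel" for n using cP[of n] by (simp add: compact_imp_closed)
    have Ib: "(\<Inter>n. P n) \<in> sets borel" using Pb by blast
    have "(\<Inter>n. P n) \<in> null_sets lebesgue" using negI by (simp add: negligible_iff_null_sets)
    then have "(\<Inter>n. P n) \<in> null_sets lborel" using null_sets_completion_iff[of "\<Inter>n. P n" lborel] Ib by simp
    then have Inull: "(\<Inter>n. P n) \<in> null_sets \<mu>" using ac by (auto simp: absolutely_continuous_def)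
    have "(\<lambda>n. measure \<mu> (P n)) \<longlonglongrightarrow> measure \<mu> (\<Inter>n. P n)"
      using Pb mu(2) decP by (intro mu.finite_Lim_measure_decseq) auto
    moreover have "measure \<mu> (\<Inter>n. P n) = 0" using Inull by (simp add: measure_def null_sets_def)
    ultimately have "eventually (\<lambda>n. measure \<mu> (P n) < \<epsilon>) sequentially"
      using \<epsilon> by (metis order_tendstoD(2))
    then obtain n where mPn: "measure \<mu> (P n) < \<epsilon>" by (auto simp: eventually_sequentially)
    define \<delta> where "\<delta> = 1 / real (Suc n)"
    have \<delta>0: "\<delta> > 0" by (simp add: \<delta>_def)
    have "Kc X Y c \<mu> \<nu> < ennreal (D + \<epsilon> * \<delta>)"
    proof -
      have "0 < \<epsilon> * \<delta>" using \<epsilon> \<delta>0 by simp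
      then show ?thesis unfolding KcD using D0 by (intro ennreal_lessI) auto
    qed
    then obtain \<pi> where \<pi>: "\<pi> \<in> couplings \<mu> \<nu>"
      and I: "(\<integral>\<^sup>+ z\<in>X \<times> Y. ennreal (c (fst z) (snd z)) \<partial>\<pi>) < ennreal (D + \<epsilon> * \<delta>)"
      unfolding Kc_def by (auto simp: INF_less_iff)
    have pi: "prob_space \<pi>" "sets \<pi> = sets borel" "distr \<pi> borel fst = \<mu>" "distr \<pi> borel snd = \<nu>"
      using \<pi> by (auto simp: couplings_def)
    interpret pi: prob_space \<pi> by (rule pi(1))
    have sppi: "space \<pi> = UNIV" using sets_eq_imp_space_eq[OF pi(2)] by simp
    have mfst: "fst \<in> measurable \<pi> borel" using meas_borel_to[OF pi(2) fst_borel] .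
    have msnd: "snd \<in> measurable \<pi> borel" using meas_borel_to[OF pi(2) snd_borel] .
    have pimu: "measure \<pi> (A \<times> UNIV) = measure \<mu> A" if "A \<in> sets borel" for A
      using marg_fst[OF pi(2) pi(3) that] by (simp add: measure_def)
    have pinu: "measure \<pi> (UNIV \<times> A) = measure \<nu> A" if "A \<in> sets borel" for A
      using marg_snd[OF pi(2) pi(4) that] by (simp add: measure_def)
    define C where "C = (\<lambda>z. indicator (X \<times> Y) z * c (fst z) (snd z))"
    have Cm: "C \<in> borel_measurable \<pi>"
    proof -
      have "(\<lambda>z. indicator (X \<times> Y) z *\<^sub>R c (fst z) (snd z)) \<in> borel_measurable borel"
        using Xo Yo cc by (intro borel_measurable_continuous_on_indicator) (auto simp: open_Times)
      then show ?thesis using meas_borel_to[OF pi(2)] by (simp add: C_def)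
    qed
    have C0: "0 \<le> C z" for z using c0 by (auto simp: C_def indicator_def)
    have nnC: "(\<integral>\<^sup>+ z. ennreal (C z) \<partial>\<pi>) = (\<integral>\<^sup>+ z\<in>X \<times> Y. ennreal (c (fst z) (snd z)) \<partial>\<pi>)"
      by (intro nn_integral_cong) (auto simp: C_def indicator_def)
    have intC: "integrable \<pi> C"
      using Cm C0 I nnC by (intro integrableI_nonneg) (auto simp: less_top[symmetric] intro: order.strict_trans)
    have valC: "integral\<^sup>L \<pi> C < D + \<epsilon> * \<delta>"
      using Cm C0 I nnC by (subst integral_eq_nn_integral) (auto intro!: enn2real_lt)
    have Gm: "G \<in> borel_measurable borel"
      using meas_borel_from[OF mu(2) borel_measurable_integrable[OF intG]] .
    have Fm: "Fn \<in> borel_measurable borel"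
      using meas_borel_from[OF nu(2) borel_measurable_integrable[OF intF]] .
    have intGp: "integrable \<pi> (\<lambda>z. G (fst z))"
      using integrable_distr_eq[OF mfst Gm] intG pi(3) by simp
    have valGp: "integral\<^sup>L \<pi> (\<lambda>z. G (fst z)) = integral\<^sup>L \<mu> G"
      using integral_distr[OF mfst Gm] pi(3) by simp
    have intFp: "integrable \<pi> (\<lambda>z. Fn (snd z))"
      using integrable_distr_eq[OF msnd Fm] intF pi(4) by simp
    have valFp: "integral\<^sup>L \<pi> (\<lambda>z. Fn (snd z)) = integral\<^sup>L \<nu> Fn"
      using integral_distr[OF msnd Fm] pi(4) by simp
    define H where "H = (\<lambda>z. C z - G (fst z) - Fn (snd z))"
    have intH: "integrable \<pi> H" unfolding H_def using intC intGp intFp by (intro Bochner_Integration.integrable_diff)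
    have valH: "integral\<^sup>L \<pi> H < \<epsilon> * \<delta>"
      unfolding H_def using intC intGp intFp valC valGp valFp Ddef
      by (simp add: Bochner_Integration.integral_diff)
    obtain N0 where N0: "{x \<in> space \<mu>. \<not> (x \<in> X \<longrightarrow> \<bar>ctrans Y c f x\<bar> \<noteq> \<infinity>)} \<subseteq> N0"
        "emeasure \<mu> N0 = 0" "N0 \<in> sets \<mu>"
      using AEg by (rule AE_E)
    define N where "N = N0"
    have N: "N \<in> null_sets \<mu>" "{x \<in> space \<mu>. \<not> (x \<in> X \<longrightarrow> \<bar>ctrans Y c f x\<bar> \<noteq> \<infinity>)} \<subseteq> N"
      using N0 by (auto simp: N_def null_sets_def)
    have Nb: "N \<in> sets borel" using N(1) mu(2) by (auto simp: null_sets_def)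
    have Nfin: "\<bar>g x\<bar> \<noteq> \<infinity>" if "x \<in> X" "x \<notin> N" for x
      using N(2) that spmu by (auto simp: g_def)
    have NUnull: "N \<times> UNIV \<in> null_sets \<pi>"
      using marg_fst[OF pi(2) pi(3) Nb] N(1) Nb pi(2) times_borel[OF Nb, of UNIV] by (auto simp: null_sets_def)
    have cXb: "(UNIV - X) \<in> sets borel" using Xo by auto
    have cYb: "(UNIV - Y) \<in> sets borel" using Yo by auto
    have mX1: "measure \<mu> X = 1" using mu(3) by (simp add: measure_def)
    have mY1: "measure \<nu> Y = 1" using nu(3) by (simp add: measure_def)
    have Yb: "Y \<in> sets borel" using Yo by simp
    have "measure \<mu> (UNIV - X) = 0"
      using mu.prob_compl[of X] mu(2) mX1 Xb spmu by simp
    then have mcX: "emeasure \<mu> (UNIV - X) = 0" by (simp add: mu.emeasure_eq_measure)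
    have "measure \<nu> (UNIV - Y) = 0"
      using nu.prob_compl[of Y] nu(2) mY1 Yb spnu by simp
    then have mcY: "emeasure \<nu> (UNIV - Y) = 0" by (simp add: nu.emeasure_eq_measure)
    have n1: "(UNIV - X) \<times> UNIV \<in> null_sets \<pi>"
      using marg_fst[OF pi(2) pi(3) cXb] mcX pi(2) times_borel[OF cXb, of UNIV] by (auto simp: null_sets_def)
    have n2: "UNIV \<times> (UNIV - Y) \<in> null_sets \<pi>"
      using marg_snd[OF pi(2) pi(4) cYb] mcY pi(2) times_borel[of UNIV, OF _ cYb] by (auto simp: null_sets_def)
    have "AE z in \<pi>. z \<notin> (N \<times> UNIV) \<union> ((UNIV - X) \<times> UNIV) \<union> (UNIV \<times> (UNIV - Y))"
      using NUnull n1 n2 by (intro AE_not_in null_sets.Un) auto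
    then have AEH: "AE z in \<pi>. 0 \<le> H z"
    proof (rule AE_mp, intro AE_I2 impI)
      fix z assume z: "z \<notin> (N \<times> UNIV) \<union> ((UNIV - X) \<times> UNIV) \<union> (UNIV \<times> (UNIV - Y))"
      obtain x y where zxy: "z = (x, y)" by (cases z)
      have xX: "x \<in> X" and yY: "y \<in> Y" and xN: "x \<notin> N" using z zxy by auto
      have "g x \<le> ereal (c x y - f y)" unfolding g_def ctrans_def using yY by (rule INF_lower)
      then have "real_of_ereal (g x) \<le> c x y - f y" using Nfin[OF xX xN] by (rule ereal_real_le[rotated])
      then show "0 \<le> H z" using xX yY by (simp add: H_def C_def Gdef Fdef zxy g_def)
    qed
    have Hm: "H \<in> borel_measurable \<pi>" using intH by (rule borel_measurable_integrable)
    define Bad where "Bad = {z \<in> space \<pi>. \<delta> \<le> H z}"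
    have Badb: "Bad \<in> sets \<pi>"
    proof -
      have "H -` {\<delta>..} \<inter> space \<pi> \<in> sets \<pi>" using measurable_sets[OF Hm, of "{\<delta>..}"] by simp
      moreover have "H -` {\<delta>..} \<inter> space \<pi> = Bad" by (auto simp: Bad_def)
      ultimately show ?thesis by simp
    qed
    have mBad: "measure \<pi> Bad < \<epsilon>"
    proof -
      have "measure \<pi> Bad \<le> integral\<^sup>L \<pi> H / \<delta>"
        unfolding Bad_def using intH AEH \<delta>0 by (intro integral_Markov_inequality_measure[where A = "space \<pi>"]) auto
      also have "\<dots> < \<epsilon>" using valH \<delta>0 by (simp add: pos_divide_less_eq)
      finally show ?thesis .
    qed
    define S1 where "S1 = (UNIV - K1) \<times> (UNIV :: 'a set)"
    define S2 where "S2 = P n \<times> (UNIV :: 'a set)"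
    define S3 where "S3 = N \<times> (UNIV :: 'a set)"
    have cover: "(UNIV :: 'a set) \<times> K2 \<subseteq> S1 \<union> S2 \<union> S3 \<union> Bad"
    proof
      fix z :: "'a \<times> 'a" assume z: "z \<in> UNIV \<times> K2"
      obtain x y where zxy: "z = (x, y)" by (cases z)
      have yK: "y \<in> K2" using z zxy by auto
      show "z \<in> S1 \<union> S2 \<union> S3 \<union> Bad"
      proof (cases "x \<in> K1 \<and> (x, y) \<notin> \<Gamma> n \<and> x \<notin> N")
        case False
        then show ?thesis using yK zxy by (force simp: S1_def S2_def S3_def P_def)
      next
        case True
        then have xK: "x \<in> K1" and nG: "(x, y) \<notin> \<Gamma> n" and xN: "x \<notin> N" by auto
        have xX: "x \<in> X" using xK K1 by auto
        have yY: "y \<in> Y" using yK K2 by auto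
        have "\<not> ereal (c x y - f y - \<delta>) \<le> g x" using nG xK yK by (simp add: \<Gamma>_def \<delta>_def)
        then have "real_of_ereal (g x) < c x y - f y - \<delta>" using Nfin[OF xX xN] by (cases "g x") auto
        then have "\<delta> \<le> H z" using xX yY by (simp add: H_def C_def Gdef Fdef zxy g_def)
        then show ?thesis by (simp add: Bad_def sppi)
      qed
    qed
    have S1b: "S1 \<in> sets \<pi>" using K1b pi(2) times_borel[of "UNIV - K1" UNIV] by (auto simp: S1_def)
    have S2b: "S2 \<in> sets \<pi>" using Pb pi(2) times_borel[of "P n" UNIV] by (auto simp: S2_def)
    have S3b: "S3 \<in> sets \<pi>" using Nb pi(2) times_borel[of N UNIV] by (auto simp: S3_def)
    have K2b: "K2 \<in> sets borel" using K2(1) by (simp add: compact_imp_closed)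
    have "measure \<nu> K2 = measure \<pi> (UNIV \<times> K2)" using pinu[OF K2b] by simp
    also have "\<dots> \<le> measure \<pi> (S1 \<union> S2 \<union> S3 \<union> Bad)"
      using cover S1b S2b S3b Badb by (intro pi.finite_measure_mono) auto
    also have "\<dots> \<le> measure \<pi> S1 + measure \<pi> S2 + measure \<pi> S3 + measure \<pi> Bad"
    proof -
      have "measure \<pi> (S1 \<union> S2 \<union> S3 \<union> Bad) \<le> measure \<pi> (S1 \<union> S2 \<union> S3) + measure \<pi> Bad"
        using S1b S2b S3b Badb by (intro measure_subadditive) auto
      moreover have "measure \<pi> (S1 \<union> S2 \<union> S3) \<le> measure \<pi> (S1 \<union> S2) + measure \<pi> S3"
        using S1b S2b S3b by (intro measure_subadditive) auto
      moreover have "measure \<pi> (S1 \<union> S2) \<le> measure \<pi> S1 + measure \<pi> S2"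
        using S1b S2b by (intro measure_subadditive) auto
      ultimately show ?thesis by linarith
    qed
    also have "\<dots> < \<epsilon> + \<epsilon> + 0 + \<epsilon>"
    proof -
      have "measure \<pi> S1 = measure \<mu> (UNIV - K1)" unfolding S1_def using K1b by (intro pimu) auto
      moreover have "measure \<pi> S2 = measure \<mu> (P n)" unfolding S2_def using Pb by (intro pimu) auto
      moreover have "measure \<pi> S3 = 0" unfolding S3_def using NUnull by (simp add: measure_def null_sets_def)
      ultimately show ?thesis using mK1 mPn mBad by linarith
    qed
    finally show ?thesis by simp
  qed
  have "measure \<nu> K2 \<le> 0"
    by (rule eps_le[where e = 1 and C = 3]) (use main in auto)
  then have "measure \<nu> K2 = 0" using measure_nonneg[of \<nu> K2] by linarith
  then show ?thesis by (simp add: nu.emeasure_eq_measure)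
qed



theorem mainTheorem14:
  fixes X Y :: "'a::euclidean_space set"
    and c :: "'a \<Rightarrow> 'a \<Rightarrow> real"
    and x0 y0 :: 'a
    and \<mu> \<nu> :: "'a measure"
    and f :: "'a \<Rightarrow> real"
    and lam :: real
  assumes "standing_assms X Y c x0 y0"
    and "Pcost_Y Y c x0 \<nu>"
    and "Pcost_X X c y0 \<mu>"
    and "optimal_potential X Y c \<mu> \<nu> f"
    and "convex_on Y (\<lambda>y. f y - lam / 2 * (norm y)\<^sup>2)"
    and "absolutely_continuous lborel \<mu>"
    and "\<exists>L. \<forall>y\<in>Y. \<exists>g. (\<forall>x\<in>X. g (grad_y c x y) = x) \<and>
                         L-lipschitz_on ((\<lambda>x. grad_y c x y) ` X) g"
  shows "absolutely_continuous lborel \<nu>"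
proof -
  have Xo: "open X" and Yo: "open Y" and c0: "\<forall>x\<in>X. \<forall>y\<in>Y. 0 \<le> c x y"
    and C2: "C2_on (X \<times> Y) (\<lambda>(x, y). c x y)"
    using assms(1) unfolding standing_assms_def by auto
  obtain g' :: "('a \<times> 'a) \<Rightarrow> ('a \<times> 'a) \<Rightarrow>\<^sub>L real"
    and g'' :: "('a \<times> 'a) \<Rightarrow> ('a \<times> 'a) \<Rightarrow>\<^sub>L (('a \<times> 'a) \<Rightarrow>\<^sub>L real)"
    where d1: "\<forall>z\<in>X \<times> Y. ((\<lambda>(x, y). c x y) has_derivative blinfun_apply (g' z)) (at z)"
      and d2: "\<forall>z\<in>X \<times> Y. (g' has_derivative blinfun_apply (g'' z)) (at z)"
      and cont: "continuous_on (X \<times> Y) g''"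
    using C2 unfolding C2_on_def by blast
  have mu: "prob_space \<mu>" "sets \<mu> = sets borel" "emeasure \<mu> X = 1"
    using assms(3) by (auto simp: Pcost_X_def prob_on_def)
  have nu: "prob_space \<nu>" "sets \<nu> = sets borel" "emeasure \<nu> Y = 1"
    using assms(2) by (auto simp: Pcost_Y_def prob_on_def)
  interpret nu: prob_space \<nu> by (rule nu(1))
  have AEg: "AE x in \<mu>. x \<in> X \<longrightarrow> \<bar>ctrans Y c f x\<bar> \<noteq> \<infinity>"
    and siG: "set_integrable \<mu> X (\<lambda>x. real_of_ereal (ctrans Y c f x))"
    and siF: "set_integrable \<nu> Y f"
    and KcE: "enn2ereal (Kc X Y c \<mu> \<nu>) =
       ereal (set_lebesgue_integral \<mu> X (\<lambda>x. real_of_ereal (ctrans Y c f x)) + set_lebesgue_integral \<nu> Y f)"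
    using assms(4) unfolding optimal_potential_def by auto
  obtain L where inv: "\<forall>y\<in>Y. \<exists>g. (\<forall>x\<in>X. g (grad_y c x y) = x) \<and> L-lipschitz_on ((\<lambda>x. grad_y c x y) ` X) g"
    using assms(7) by blast
  define G where "G = (\<lambda>x. indicator X x *\<^sub>R real_of_ereal (ctrans Y c f x))"
  define Fn where "Fn = (\<lambda>y. indicator Y y *\<^sub>R f y)"
  have intG: "integrable \<mu> G" using siG by (simp add: set_integrable_def G_def)
  have intF: "integrable \<nu> Fn" using siF by (simp add: set_integrable_def Fn_def)
  define D where "D = integral\<^sup>L \<mu> G + integral\<^sup>L \<nu> Fn"
  have KcE': "enn2ereal (Kc X Y c \<mu> \<nu>) = ereal D"
    using KcE by (simp add: D_def G_def Fn_def set_lebesgue_integral_def)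
  have D0: "D \<ge> 0"
  proof -
    have "0 \<le> enn2ereal (Kc X Y c \<mu> \<nu>)" by (rule enn2ereal_nonneg)
    then show ?thesis using KcE' by simp
  qed
  have KcD: "Kc X Y c \<mu> \<nu> = ennreal D"
    using KcE' D0 by (metis enn2ereal_ennreal enn2ereal_inject)
  have spnu: "space \<nu> = UNIV" using sets_eq_imp_space_eq[OF nu(2)] by simp
  show ?thesis unfolding absolutely_continuous_def
  proof
    fix E :: "'a set" assume E: "E \<in> null_sets lborel"
    have Eb: "E \<in> sets borel" using E by (auto simp: null_sets_def)
    have negE: "negligible E" using null_sets_completionI[OF E] by (simp add: negligible_iff_null_sets)
    have Yb: "Y \<in> sets borel" using Yo by simp
    have piece: "emeasure \<nu> K = 0" if K: "K \<in> {K. K \<subseteq> E \<inter> Y \<and> compact K}" for K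
    proof (rule piece_null[OF Xo Yo d1 d2 cont assms(5) inv mu nu assms(6) c0 AEg G_def Fn_def intG intF KcD D0 D_def])
      show "compact K" using K by simp
      show "K \<subseteq> Y" using K by auto
      show "negligible K" using negE K by (auto intro: negligible_subset)
    qed
    have "emeasure \<nu> (E \<inter> Y) = (SUP K \<in> {K. K \<subseteq> E \<inter> Y \<and> compact K}. emeasure \<nu> K)"
      by (rule inner_regular[OF nu(2)]) (use Eb Yb in auto)
    also have "\<dots> = (SUP K \<in> {K. K \<subseteq> E \<inter> Y \<and> compact K}. (0::ennreal))"
      by (rule SUP_cong) (use piece in auto)
    also have "\<dots> = 0"
    proof (rule SUP_const)
      have "{} \<in> {K. K \<subseteq> E \<inter> Y \<and> compact K}" by simp
      then show "{K. K \<subseteq> E \<inter> Y \<and> compact K} \<noteq> {}" by blast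
    qed
    finally have EY: "emeasure \<nu> (E \<inter> Y) = 0" .
    have mY1: "measure \<nu> Y = 1" using nu(3) by (simp add: measure_def)
    have "measure \<nu> (UNIV - Y) = 0" using nu.prob_compl[of Y] nu(2) mY1 Yb spnu by simp
    then have cY: "emeasure \<nu> (UNIV - Y) = 0" by (simp add: nu.emeasure_eq_measure)
    have "emeasure \<nu> E \<le> emeasure \<nu> ((E \<inter> Y) \<union> (UNIV - Y))"
      using Eb Yb nu(2) by (intro emeasure_mono) auto
    also have "\<dots> \<le> emeasure \<nu> (E \<inter> Y) + emeasure \<nu> (UNIV - Y)"
      using Eb Yb nu(2) by (intro emeasure_subadditive) auto
    finally have "emeasure \<nu> E = 0" using EY cY by simp
    then show "E \<in> null_sets \<nu>" using Eb nu(2) by (auto simp: null_sets_def)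
  qed
qed


end
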